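(* In every approval-based SCV instance, every committee maximizing the IW-PAV score among all committees satisfies IW-JR.
   Context: An approval-based sub-committee voting (SCV) instance consists of a set of voters $N=\{1,\ldots,n\}$, a finite set of candidates $C$ partitioned into candidate subsets $C_1,\ldots,C_\ell$, positive integer quotas $k_j\le |C_j|$, and approval ballots $A_i\subseteq C$ for $i\in N$. A committee is a set $W\subseteq C$ with $|W\cap C_j|=k_j$ for every $j$. Let $r(0)=0$ and $r(t)=\sum_{p=1}^t 1/p$ for $t\ge1$. The IW-PAV score of $W$ is $\sum_{j=1}^\ell\sum_{i\in N} r(|W\cap A_i\cap C_j|)$. $W$ satisfies Intra-wise JR (IW-JR) if for every $X\subseteq N$ and every $j$, whenever $|X|\ge n/k_j$ and $|(\bigcap_{i\in X}A_i)\cap C_j|\ge 1$, we have $|W\cap C_j\cap \bigcup_{i\in X}A_i|\ge 1$. *)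

theory Defs
  imports Main Complex_Main
begin

text \<open>Approval-based sub-committee voting (SCV). Voters are N = {1..n},
candidate subsets are indexed by j in {1..l} (given by Cs j), quotas are k j,
and ballots are A i.\<close>

definition scv_instance ::
  "nat \<Rightarrow> 'c set \<Rightarrow> nat \<Rightarrow> (nat \<Rightarrow> 'c set) \<Rightarrow> (nat \<Rightarrow> nat) \<Rightarrow> (nat \<Rightarrow> 'c set) \<Rightarrow> bool" where
  "scv_instance n C l Cs k A \<longleftrightarrow>
     n \<ge> 1 \<and> finite C \<and>
     (\<Union>j\<in>{1..l}. Cs j) = C \<and>
     (\<forall>j\<in>{1..l}. \<forall>j'\<in>{1..l}. j \<noteq> j' \<longrightarrow> Cs j \<inter> Cs j' = {}) \<and>
     (\<forall>j\<in>{1..l}. Cs j \<noteq> {}) \<and>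
     (\<forall>j\<in>{1..l}. 1 \<le> k j \<and> k j \<le> card (Cs j)) \<and>
     (\<forall>i\<in>{1..n}. A i \<subseteq> C)"

definition committee ::
  "'c set \<Rightarrow> nat \<Rightarrow> (nat \<Rightarrow> 'c set) \<Rightarrow> (nat \<Rightarrow> nat) \<Rightarrow> 'c set \<Rightarrow> bool" where
  "committee C l Cs k W \<longleftrightarrow> W \<subseteq> C \<and> (\<forall>j\<in>{1..l}. card (W \<inter> Cs j) = k j)"

definition harm :: "nat \<Rightarrow> real" where
  "harm t = (\<Sum>p\<in>{1..t}. 1 / real p)"

definition iw_pav_score ::
  "nat \<Rightarrow> nat \<Rightarrow> (nat \<Rightarrow> 'c set) \<Rightarrow> (nat \<Rightarrow> 'c set) \<Rightarrow> 'c set \<Rightarrow> real" where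
  "iw_pav_score n l Cs A W = (\<Sum>j\<in>{1..l}. \<Sum>i\<in>{1..n}. harm (card (W \<inter> A i \<inter> Cs j)))"

definition iw_jr ::
  "nat \<Rightarrow> nat \<Rightarrow> (nat \<Rightarrow> 'c set) \<Rightarrow> (nat \<Rightarrow> nat) \<Rightarrow> (nat \<Rightarrow> 'c set) \<Rightarrow> 'c set \<Rightarrow> bool" where
  "iw_jr n l Cs k A W \<longleftrightarrow>
     (\<forall>X. X \<subseteq> {1..n} \<longrightarrow> (\<forall>j\<in>{1..l}.
        (real (card X) \<ge> real n / real (k j) \<and> card ((\<Inter>i\<in>X. A i) \<inter> Cs j) \<ge> 1)
        \<longrightarrow> card (W \<inter> Cs j \<inter> (\<Union>i\<in>X. A i)) \<ge> 1))"

end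

theory Submission
  imports Defs
begin

lemma harm_Suc: "harm (Suc u) = harm u + 1 / real (Suc u)"
  unfolding harm_def by simp

lemma harm_mono: "a \<le> b \<Longrightarrow> harm a \<le> harm b"
  unfolding harm_def by (rule sum_mono2) auto

lemma harm_one: "harm 1 = 1" unfolding harm_def by simp

lemma harm_drop: "u \<ge> 1 \<Longrightarrow> harm u - harm (u - 1) = 1 / real u"
  by (cases u) (auto simp: harm_Suc)

theorem mainTheorem9:
  fixes n l :: nat and C :: "'c set" and Cs A :: "nat \<Rightarrow> 'c set" and k :: "nat \<Rightarrow> nat"
    and W :: "'c set"
  assumes "scv_instance n C l Cs k A"
    and "committee C l Cs k W"
    and "\<forall>W'. committee C l Cs k W' \<longrightarrow> iw_pav_score n l Cs A W' \<le> iw_pav_score n l Cs A W"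
  shows "iw_jr n l Cs k A W"
  unfolding iw_jr_def
proof (intro allI impI ballI, rule ccontr)
  fix X j
  assume XN: "X \<subseteq> {1..n}" and j: "j \<in> {1..l}"
    and hyp: "real (card X) \<ge> real n / real (k j) \<and> card ((\<Inter>i\<in>X. A i) \<inter> Cs j) \<ge> 1"
    and neg: "\<not> card (W \<inter> Cs j \<inter> (\<Union>i\<in>X. A i)) \<ge> 1"
  note inst = assms(1)[unfolded scv_instance_def]
  note com = assms(2)[unfolded committee_def]
  have disj: "\<forall>j\<in>{1..l}. \<forall>j'\<in>{1..l}. j \<noteq> j' \<longrightarrow> Cs j \<inter> Cs j' = {}"
    using inst by (elim conjE) assumption
  have n1: "n \<ge> 1" and finC: "finite C" using inst by auto
  have kj: "1 \<le> k j" using inst j by auto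
  have CsC: "Cs j \<subseteq> C" using inst j by blast
  have WC: "W \<subseteq> C" using com by auto
  define S where "S = W \<inter> Cs j"
  have finS: "finite S" using finC WC S_def finite_subset by blast
  have cardS: "card S = k j" using com j S_def by auto
  have finX: "finite X" using XN finite_subset by blast
  have kpos: "real (k j) > 0" using kj by simp
  have Xge: "real (card X) * real (k j) \<ge> real n"
    using hyp kpos by (simp add: divide_le_eq)
  have Xpos: "card X \<ge> 1"
  proof (rule ccontr)
    assume "\<not> card X \<ge> 1" then have "card X = 0" by simp
    then show False using Xge n1 by simp
  qed
  have "(\<Inter>i\<in>X. A i) \<inter> Cs j \<noteq> {}" using hyp by (metis card.empty not_one_le_zero)
  then obtain c where cX: "\<forall>i\<in>X. c \<in> A i" and cC: "c \<in> Cs j" by blast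
  have empty: "S \<inter> (\<Union>i\<in>X. A i) = {}"
  proof -
    have "finite (S \<inter> (\<Union>i\<in>X. A i))" using finS by simp
    then show ?thesis using neg S_def by (simp add: Suc_le_eq card_gt_0_iff)
  qed
  have Xne: "X \<noteq> {}" using Xpos by auto
  have cW: "c \<notin> W" using cX cC empty Xne S_def by blast
  define u where "u i = card (S \<inter> A i)" for i
  define f where "f w i = (if w \<in> A i then 1 / real (u i) else 0)" for w i
  have uX: "u i = 0" if "i \<in> X" for i
  proof -
    have "S \<inter> A i = {}" using empty that by blast
    then show ?thesis using u_def by simp
  qed
  have sumf: "(\<Sum>w\<in>S. \<Sum>i\<in>{1..n}. f w i) \<le> real n - real (card X)"
  proof -
    have "(\<Sum>w\<in>S. \<Sum>i\<in>{1..n}. f w i) = (\<Sum>i\<in>{1..n}. \<Sum>w\<in>S. f w i)"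
      by (rule sum.swap)
    also have "\<dots> = (\<Sum>i\<in>{1..n}. if u i = 0 then 0 else 1)"
    proof (rule sum.cong[OF refl])
      fix i
      have "(\<Sum>w\<in>S. f w i) = (\<Sum>w\<in>S \<inter> A i. 1 / real (u i))"
        unfolding f_def using finS sum.inter_filter[OF finS, of "\<lambda>w. 1 / real (u i)" "\<lambda>w. w \<in> A i", symmetric]
        by (simp add: Int_def)
      also have "\<dots> = real (u i) * (1 / real (u i))" using u_def by simp
      finally show "(\<Sum>w\<in>S. f w i) = (if u i = 0 then 0 else 1)" by simp
    qed
    also have "\<dots> \<le> (\<Sum>i\<in>{1..n}. if i \<in> X then 0 else 1)"
      by (rule sum_mono) (auto simp: uX)
    also have "\<dots> = real (card ({1..n} - X))"
      by (simp add: sum.If_cases Diff_eq)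
    also have "\<dots> = real n - real (card X)"
      proof -
      have "card X \<le> n" using card_mono[OF _ XN] by simp
      then show ?thesis using XN finX by (simp add: card_Diff_subset of_nat_diff)
    qed
    finally show ?thesis .
  qed
  have "\<exists>w\<in>S. (\<Sum>i\<in>{1..n}. f w i) * real (k j) \<le> real n - real (card X)"
  proof (rule ccontr)
    assume "\<not> ?thesis"
    then have lt: "\<forall>w\<in>S. (real n - real (card X)) / real (k j) < (\<Sum>i\<in>{1..n}. f w i)"
      using kpos by (auto simp: divide_less_eq not_le)
    have Sne: "S \<noteq> {}" using cardS kj by auto
    have "(\<Sum>w\<in>S. (real n - real (card X)) / real (k j)) < (\<Sum>w\<in>S. \<Sum>i\<in>{1..n}. f w i)"
      by (rule sum_strict_mono[OF finS Sne]) (use lt in blast)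
    then show False using sumf cardS kpos by simp
  qed
  then obtain w where wS: "w \<in> S" and wb: "(\<Sum>i\<in>{1..n}. f w i) * real (k j) \<le> real n - real (card X)"
    by blast
  define W' where "W' = insert c (W - {w})"
  have wC: "w \<in> Cs j" using wS S_def by auto
  have com': "committee C l Cs k W'"
    unfolding committee_def
  proof (intro conjI ballI)
    show "W' \<subseteq> C" using WC CsC cC W'_def by auto
    fix j' assume j': "j' \<in> {1..l}"
    show "card (W' \<inter> Cs j') = k j'"
    proof (cases "j' = j")
      case True
      have "W' \<inter> Cs j' = insert c (S - {w})" using True W'_def S_def cC by auto
      moreover have "c \<notin> S - {w}" using cW S_def by auto
      moreover have "card (S - {w}) = k j - 1" using wS finS cardS by simp
      ultimately show ?thesis using True finS kj by simp
    next
      case False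
      have dis: "Cs j \<inter> Cs j' = {}" using disj j j' False by blast
      have "W' \<inter> Cs j' = W \<inter> Cs j'" using W'_def dis cC wC by auto
      then show ?thesis using com j' by auto
    qed
  qed
  define h where "h V i = harm (card (V \<inter> A i \<inter> Cs j))" for V i
  have diff: "iw_pav_score n l Cs A W' - iw_pav_score n l Cs A W
      = (\<Sum>i\<in>{1..n}. h W' i - h W i)"
  proof -
    have oth: "W' \<inter> A i \<inter> Cs j' = W \<inter> A i \<inter> Cs j'" if "j' \<in> {1..l} - {j}" for i j'
    proof -
      have dis: "Cs j \<inter> Cs j' = {}" using disj j that by blast
      then show ?thesis using W'_def cC wC by auto
    qed
    have "iw_pav_score n l Cs A W' - iw_pav_score n l Cs A W =
      (\<Sum>j'\<in>{1..l}. (\<Sum>i\<in>{1..n}. harm (card (W' \<inter> A i \<inter> Cs j'))) - (\<Sum>i\<in>{1..n}. harm (card (W \<inter> A i \<inter> Cs j'))))"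
      unfolding iw_pav_score_def by (simp add: sum_subtractf)
    also have "\<dots> = (\<Sum>i\<in>{1..n}. harm (card (W' \<inter> A i \<inter> Cs j))) - (\<Sum>i\<in>{1..n}. harm (card (W \<inter> A i \<inter> Cs j)))
       + (\<Sum>j'\<in>{1..l} - {j}. (\<Sum>i\<in>{1..n}. harm (card (W' \<inter> A i \<inter> Cs j'))) - (\<Sum>i\<in>{1..n}. harm (card (W \<inter> A i \<inter> Cs j'))))"
      by (subst sum.remove[OF _ j]) auto
    also have "(\<Sum>j'\<in>{1..l} - {j}. (\<Sum>i\<in>{1..n}. harm (card (W' \<inter> A i \<inter> Cs j'))) - (\<Sum>i\<in>{1..n}. harm (card (W \<inter> A i \<inter> Cs j')))) = 0"
      by (rule sum.neutral) (simp add: oth)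
    finally show ?thesis unfolding h_def by (simp add: sum_subtractf)
  qed
  have perv: "h W' i - h W i \<ge> (if i \<in> X then 1 else 0) - f w i" if i: "i \<in> {1..n}" for i
  proof -
    have hW: "h W i = harm (u i)" unfolding h_def u_def S_def by (simp add: Int_assoc Int_commute Int_left_commute)
    have W'eq: "W' \<inter> A i \<inter> Cs j = (insert c (S - {w})) \<inter> A i"
      using W'_def S_def cC by auto
    show ?thesis
    proof (cases "i \<in> X")
      case True
      have "w \<notin> A i" using True wS empty by auto
      have "S \<inter> A i = {}" using True empty by auto
      then have "W' \<inter> A i \<inter> Cs j = {c}" using W'eq True cX by auto
      then show ?thesis using True hW uX harm_one \<open>w \<notin> A i\<close> unfolding h_def f_def
        by (simp add: harm_def)
    next
      case False
      have finI: "finite (insert c (S - {w}) \<inter> A i)" using finS by simp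
      have "(S - {w}) \<inter> A i \<subseteq> insert c (S - {w}) \<inter> A i" by auto
      then have le: "card ((S - {w}) \<inter> A i) \<le> card (W' \<inter> A i \<inter> Cs j)"
        using W'eq finI card_mono by metis
      have hW': "h W' i \<ge> harm (card ((S - {w}) \<inter> A i))"
        unfolding h_def using harm_mono[OF le] .
      show ?thesis
      proof (cases "w \<in> A i")
        case True
        have "card ((S - {w}) \<inter> A i) = u i - 1"
        proof -
          have "(S - {w}) \<inter> A i = (S \<inter> A i) - {w}" by auto
          then show ?thesis using True wS finS u_def by simp
        qed
        moreover have "u i \<ge> 1" using True wS finS u_def
          by (metis IntI One_nat_def Suc_leI card_gt_0_iff emptyE finite_Int)
        ultimately show ?thesis using hW' hW harm_drop[of "u i"] False True unfolding f_def
          by simp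
      next
        case wn: False
        have "(S - {w}) \<inter> A i = S \<inter> A i" using wn by auto
        then show ?thesis using hW' hW False wn unfolding f_def u_def by simp
      qed
    qed
  qed
  have "iw_pav_score n l Cs A W' - iw_pav_score n l Cs A W
      \<ge> (\<Sum>i\<in>{1..n}. (if i \<in> X then 1 else 0) - f w i)"
    unfolding diff by (rule sum_mono) (use perv in auto)
  also have "(\<Sum>i\<in>{1..n}. (if i \<in> X then 1 else 0) - f w i) = real (card X) - (\<Sum>i\<in>{1..n}. f w i)"
  proof -
    have "(\<Sum>i\<in>{1..n}. (if i \<in> X then 1 else 0::real)) = real (card X)"
      using XN by (simp add: sum.If_cases Int_absorb1)
    then show ?thesis by (simp add: sum_subtractf)
  qed
  finally have gain: "iw_pav_score n l Cs A W' - iw_pav_score n l Cs A W \<ge> real (card X) - (\<Sum>i\<in>{1..n}. f w i)" .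
  have "(\<Sum>i\<in>{1..n}. f w i) < real (card X)"
  proof -
    have "(\<Sum>i\<in>{1..n}. f w i) * real (k j) \<le> real n - real (card X)" by (rule wb)
    also have "\<dots> < real (card X) * real (k j)" using Xge Xpos by linarith
    finally show ?thesis using kpos by (simp add: mult_less_cancel_right)
  qed
  then have "iw_pav_score n l Cs A W' > iw_pav_score n l Cs A W" using gain by linarith
  then show False using assms(3) com' by force
qed

end
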